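(* Let $G$ be a graph and let $\mathbf{K}=(K,\mathbf{a},\mathbf{b})\in\mathscr{G}(k,l)$, $\mathbf{H}=(H,\mathbf{a}',\mathbf{b}')\in\mathscr{G}(k',l')$. Then: (1) $\hat T^G_{\mathbf{K}}\otimes\hat T^G_{\mathbf{H}}=\sum_f\hat T^G_{\mathbf{K}\cup_f\mathbf{H}}$, where the sum runs over all vertex overlaps $f$ of $K$ and $H$; (2) if $k'=l$, then $\hat T^G_{\mathbf{H}}\hat T^G_{\mathbf{K}}=\sum_f\hat T^G_{\mathbf{H}\cdot_f\mathbf{K}}$, where the sum runs over all vertex overlaps $f$ of $K$ and $H$ with $(b_i,a'_i)\in f$ for all $i$; in particular $\hat T^G_{\mathbf{H}}\hat T^G_{\mathbf{K}}=0$ if $\ker\mathbf{b}\ne\ker\mathbf{a}'$; (3) $(\hat T^G_{\mathbf{K}})^*=\hat T^G_{\mathbf{K}^*}$.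
   Context: Graphs are finite, undirected, without multiple edges, loops allowed; graph homomorphisms map edges (including loops) to edges. A bilabelled graph $(K,\mathbf{a},\mathbf{b})\in\mathscr{G}(k,l)$ consists of a graph $K$ and tuples $\mathbf{a}\in V(K)^k$, $\mathbf{b}\in V(K)^l$ (up to isomorphism); its involution is $(K,\mathbf{b},\mathbf{a})$. A vertex overlap of $K,H$ is a subset $f\subset V(K)\times V(H)$ in which each vertex occurs at most once; $K\cup_fH$ is the quotient of $K\sqcup H$ identifying $v$ with $w$ for $(v,w)\in f$ (edges between vertices of the quotient iff between some representatives), with induced maps $f_K,f_H$. Then $\mathbf{K}\cup_f\mathbf{H}:=(K\cup_fH,f_K(\mathbf{a})f_H(\mathbf{a}'),f_K(\mathbf{b})f_H(\mathbf{b}'))$ (concatenated tuples), and, if $(b_i,a'_i)\in f$ for all $i$, $\mathbf{H}\cdot_f\mathbf{K}:=(K\cup_fH,f_K(\mathbf{a}),f_H(\mathbf{b}'))$. $\ker\mathbf{b}$ is the partition of positions of $\mathbf{b}$ by equal entries. With the vertices of $G$ labelled $1,\dots,n$, $\hat T^G_{\mathbf{K}}\colon(\mathbb{C}^n)^{\otimes k}\to(\mathbb{C}^n)^{\otimes l}$ has entries $[\hat T^G_{\mathbf{K}}]_{\mathbf{j}\mathbf{i}}=\#\{\phi\colon K\to G\text{ injective homomorphism}\mid\phi(\mathbf{a})=\mathbf{i},\phi(\mathbf{b})=\mathbf{j}\}$ (coefficient of $e_{j_1}\otimes\cdots\otimes e_{j_l}$ in the image of $e_{i_1}\otimes\cdots\otimes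 e_{i_k}$). *)

theory Defs
  imports Complex_Main "HOL-Library.FuncSet"
begin

text \<open>Graphs: finite vertex set, symmetric edge relation (loops allowed, no multi-edges).\<close>
record 'v graph =
  verts :: "'v set"
  edges :: "('v \<times> 'v) set"

definition is_graph :: "'v graph \<Rightarrow> bool" where
  "is_graph G \<longleftrightarrow> finite (verts G) \<and> edges G \<subseteq> verts G \<times> verts G \<and> sym (edges G)"

definition is_bilabelled :: "'v graph \<Rightarrow> 'v list \<Rightarrow> 'v list \<Rightarrow> bool" where
  "is_bilabelled K a b \<longleftrightarrow> is_graph K \<and> set a \<subseteq> verts K \<and> set b \<subseteq> verts K"

definition inj_hom :: "'v graph \<Rightarrow> 'g graph \<Rightarrow> ('v \<Rightarrow> 'g) \<Rightarrow> bool" where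
  "inj_hom K G \<phi> \<longleftrightarrow> \<phi> \<in> verts K \<rightarrow>\<^sub>E verts G \<and> inj_on \<phi> (verts K) \<and>
     (\<forall>(u, v) \<in> edges K. (\<phi> u, \<phi> v) \<in> edges G)"

text \<open>Linear maps (C^V)^{\<otimes>k} \<rightarrow> (C^V)^{\<otimes>l} are represented by their matrices,
  indexed by tuples (lists) of vertices of G: entry (j, i) is the coefficient of e_j in the
  image of e_i.  Entries outside the relevant index sets are 0.\<close>
type_synonym 'g op = "'g list \<Rightarrow> 'g list \<Rightarrow> complex"

definition hom_op :: "'g graph \<Rightarrow> 'v graph \<Rightarrow> 'v list \<Rightarrow> 'v list \<Rightarrow> 'g op" where
  "hom_op G K a b = (\<lambda>j i. of_nat (card {\<phi>. inj_hom K G \<phi> \<and> map \<phi> a = i \<and> map \<phi> b = j}))"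

definition op_tensor :: "nat \<Rightarrow> nat \<Rightarrow> nat \<Rightarrow> nat \<Rightarrow> 'g op \<Rightarrow> 'g op \<Rightarrow> 'g op" where
  "op_tensor k l k' l' A B = (\<lambda>j i. if length j = l + l' \<and> length i = k + k'
      then A (take l j) (take k i) * B (drop l j) (drop k i) else 0)"

definition op_comp :: "'g set \<Rightarrow> nat \<Rightarrow> 'g op \<Rightarrow> 'g op \<Rightarrow> 'g op" where
  "op_comp V m B A = (\<lambda>j i. \<Sum>t\<in>{t. set t \<subseteq> V \<and> length t = m}. B j t * A t i)"

definition op_adj :: "'g op \<Rightarrow> 'g op" where
  "op_adj A = (\<lambda>j i. cnj (A i j))"

definition op_zero :: "'g op" where
  "op_zero = (\<lambda>j i. 0)"

definition vertex_overlap :: "'a graph \<Rightarrow> 'b graph \<Rightarrow> ('a \<times> 'b) set \<Rightarrow> bool" where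
  "vertex_overlap K H f \<longleftrightarrow> f \<subseteq> verts K \<times> verts H \<and>
     (\<forall>v w w'. (v, w) \<in> f \<longrightarrow> (v, w') \<in> f \<longrightarrow> w = w') \<and>
     (\<forall>v v' w. (v, w) \<in> f \<longrightarrow> (v', w) \<in> f \<longrightarrow> v = v')"

text \<open>The quotient K \<union>_f H: vertices are equivalence classes in the disjoint union.\<close>
definition fK :: "('a \<times> 'b) set \<Rightarrow> 'a \<Rightarrow> ('a + 'b) set" where
  "fK f v = insert (Inl v) {Inr w | w. (v, w) \<in> f}"

definition fH :: "('a \<times> 'b) set \<Rightarrow> 'b \<Rightarrow> ('a + 'b) set" where
  "fH f w = insert (Inr w) {Inl v | v. (v, w) \<in> f}"

definition sum_edges :: "'a graph \<Rightarrow> 'b graph \<Rightarrow> (('a + 'b) \<times> ('a + 'b)) set" where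
  "sum_edges K H = {(Inl u, Inl v) | u v. (u, v) \<in> edges K} \<union> {(Inr u, Inr v) | u v. (u, v) \<in> edges H}"

definition glue :: "'a graph \<Rightarrow> 'b graph \<Rightarrow> ('a \<times> 'b) set \<Rightarrow> ('a + 'b) set graph" where
  "glue K H f =
     (let V = fK f ` verts K \<union> fH f ` verts H
      in \<lparr>verts = V, edges = {(c, d). c \<in> V \<and> d \<in> V \<and> (\<exists>x\<in>c. \<exists>y\<in>d. (x, y) \<in> sum_edges K H)}\<rparr>)"

text \<open>Kernel of a tuple: the partition of positions by equal entries (as an equivalence relation).\<close>
definition ker :: "'v list \<Rightarrow> (nat \<times> nat) set" where
  "ker b = {(i, j). i < length b \<and> j < length b \<and> b ! i = b ! j}"

end

theory Submission
  imports Defs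
begin

lemma mem_fK: "x \<in> fK f v \<longleftrightarrow> x = Inl v \<or> (\<exists>w. x = Inr w \<and> (v, w) \<in> f)"
  by (auto simp: fK_def)

lemma mem_fH: "x \<in> fH f w \<longleftrightarrow> x = Inr w \<or> (\<exists>v. x = Inl v \<and> (v, w) \<in> f)"
  by (auto simp: fH_def)

lemma fK_inj: "fK f v = fK f v' \<Longrightarrow> v = v'"
  by (metis mem_fK sum.distinct(1) sum.inject(1))

lemma fH_inj: "fH f w = fH f w' \<Longrightarrow> w = w'"
  by (metis mem_fH sum.distinct(1) sum.inject(2))

lemma fK_fH: assumes "vertex_overlap K H f"
  shows "fK f v = fH f w \<longleftrightarrow> (v, w) \<in> f"
proof
  assume "fK f v = fH f w"
  moreover have "Inl v \<in> fK f v" by (simp add: mem_fK)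
  ultimately have "Inl v \<in> fH f w" by simp
  then show "(v, w) \<in> f" by (auto simp: mem_fH)
next
  assume vw: "(v, w) \<in> f"
  show "fK f v = fH f w"
  proof (rule set_eqI)
    fix x
    show "x \<in> fK f v \<longleftrightarrow> x \<in> fH f w"
      using vw assms unfolding mem_fK mem_fH vertex_overlap_def by blast
  qed
qed

lemma glue_verts: "verts (glue K H f) = fK f ` verts K \<union> fH f ` verts H"
  by (simp add: glue_def Let_def)

lemma glue_edges: "edges (glue K H f) = {(c, d). c \<in> verts (glue K H f) \<and> d \<in> verts (glue K H f) \<and>
   (\<exists>x\<in>c. \<exists>y\<in>d. (x, y) \<in> sum_edges K H)}"
  by (simp add: glue_def Let_def)

definition valf :: "('a \<Rightarrow> 'g) \<Rightarrow> ('b \<Rightarrow> 'g) \<Rightarrow> 'a + 'b \<Rightarrow> 'g" where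
  "valf \<phi> \<psi> x = (case x of Inl v \<Rightarrow> \<phi> v | Inr w \<Rightarrow> \<psi> w)"

definition ovl :: "'a set \<Rightarrow> 'b set \<Rightarrow> ('a \<Rightarrow> 'g) \<Rightarrow> ('b \<Rightarrow> 'g) \<Rightarrow> ('a \<times> 'b) set" where
  "ovl VK VH \<phi> \<psi> = {(v, w). v \<in> VK \<and> w \<in> VH \<and> \<phi> v = \<psi> w}"

definition chi :: "('a + 'b) set set \<Rightarrow> ('a \<Rightarrow> 'g) \<Rightarrow> ('b \<Rightarrow> 'g) \<Rightarrow> ('a + 'b) set \<Rightarrow> 'g" where
  "chi V \<phi> \<psi> c = (if c \<in> V then valf \<phi> \<psi> (SOME x. x \<in> c) else undefined)"

definition Theta :: "'a graph \<Rightarrow> 'b graph \<Rightarrow> ('a \<times> 'b) set \<times> (('a + 'b) set \<Rightarrow> 'g) \<Rightarrow> ('a \<Rightarrow> 'g) \<times> ('b \<Rightarrow> 'g)" where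
  "Theta K H p = (restrict (snd p \<circ> fK (fst p)) (verts K), restrict (snd p \<circ> fH (fst p)) (verts H))"

definition Psi :: "'a graph \<Rightarrow> 'b graph \<Rightarrow> ('a \<Rightarrow> 'g) \<times> ('b \<Rightarrow> 'g) \<Rightarrow> ('a \<times> 'b) set \<times> (('a + 'b) set \<Rightarrow> 'g)" where
  "Psi K H q = (let f = ovl (verts K) (verts H) (fst q) (snd q) in (f, chi (verts (glue K H f)) (fst q) (snd q)))"

lemma ovl_overlap:
  assumes "inj_hom K G \<phi>" "inj_hom H G \<psi>"
  shows "vertex_overlap K H (ovl (verts K) (verts H) \<phi> \<psi>)"
  using assms unfolding vertex_overlap_def ovl_def inj_hom_def inj_on_def by auto

lemma valf_fK:
  assumes "v \<in> verts K" "x \<in> fK (ovl (verts K) (verts H) \<phi> \<psi>) v"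
  shows "valf \<phi> \<psi> x = \<phi> v"
  using assms by (auto simp: mem_fK valf_def ovl_def)

lemma valf_fH:
  assumes "w \<in> verts H" "x \<in> fH (ovl (verts K) (verts H) \<phi> \<psi>) w"
  shows "valf \<phi> \<psi> x = \<psi> w"
  using assms by (auto simp: mem_fH valf_def ovl_def)

lemma chi_fK:
  assumes "v \<in> verts K"
  shows "chi (verts (glue K H (ovl (verts K) (verts H) \<phi> \<psi>))) \<phi> \<psi> (fK (ovl (verts K) (verts H) \<phi> \<psi>) v) = \<phi> v"
proof -
  let ?f = "ovl (verts K) (verts H) \<phi> \<psi>"
  have "Inl v \<in> fK ?f v" by (simp add: mem_fK)
  then have "(SOME x. x \<in> fK ?f v) \<in> fK ?f v" by (rule someI)
  then show ?thesis using assms valf_fK[OF assms] by (simp add: chi_def glue_verts)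
qed

lemma chi_fH:
  assumes "w \<in> verts H"
  shows "chi (verts (glue K H (ovl (verts K) (verts H) \<phi> \<psi>))) \<phi> \<psi> (fH (ovl (verts K) (verts H) \<phi> \<psi>) w) = \<psi> w"
proof -
  let ?f = "ovl (verts K) (verts H) \<phi> \<psi>"
  have "Inr w \<in> fH ?f w" by (simp add: mem_fH)
  then have "(SOME x. x \<in> fH ?f w) \<in> fH ?f w" by (rule someI)
  then show ?thesis using assms valf_fH[OF assms] by (simp add: chi_def glue_verts)
qed

lemma chi_val:
  assumes "c \<in> verts (glue K H (ovl (verts K) (verts H) \<phi> \<psi>))" "x \<in> c"
  shows "chi (verts (glue K H (ovl (verts K) (verts H) \<phi> \<psi>))) \<phi> \<psi> c = valf \<phi> \<psi> x"
proof -
  have "c \<in> fK (ovl (verts K) (verts H) \<phi> \<psi>) ` verts K \<union> fH (ovl (verts K) (verts H) \<phi> \<psi>) ` verts H"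
    using assms(1) by (simp add: glue_verts)
  then show ?thesis using assms(2)
    by (auto simp: chi_fK chi_fH valf_fK valf_fH)
qed


lemma fK_in_glue: "v \<in> verts K \<Longrightarrow> fK f v \<in> verts (glue K H f)"
  by (simp add: glue_verts)
lemma fH_in_glue: "w \<in> verts H \<Longrightarrow> fH f w \<in> verts (glue K H f)"
  by (simp add: glue_verts)

lemma Theta_into:
  assumes K: "is_graph K" and H: "is_graph H" and f: "vertex_overlap K H f"
    and chi: "inj_hom (glue K H f) G \<chi>"
  shows "inj_hom K G (restrict (\<chi> \<circ> fK f) (verts K)) \<and> inj_hom H G (restrict (\<chi> \<circ> fH f) (verts H))"
proof -
  have ext: "\<chi> \<in> verts (glue K H f) \<rightarrow>\<^sub>E verts G" and inj: "inj_on \<chi> (verts (glue K H f))"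
    and ed: "\<And>c d. (c, d) \<in> edges (glue K H f) \<Longrightarrow> (\<chi> c, \<chi> d) \<in> edges G"
    using chi unfolding inj_hom_def by auto
  have eK: "(u, v) \<in> edges K \<Longrightarrow> u \<in> verts K \<and> v \<in> verts K" for u v
    using K unfolding is_graph_def by auto
  have eH: "(u, v) \<in> edges H \<Longrightarrow> u \<in> verts H \<and> v \<in> verts H" for u v
    using H unfolding is_graph_def by auto
  have 1: "inj_hom K G (restrict (\<chi> \<circ> fK f) (verts K))"
    unfolding inj_hom_def
  proof (intro conjI)
    show "restrict (\<chi> \<circ> fK f) (verts K) \<in> verts K \<rightarrow>\<^sub>E verts G"
      using ext fK_in_glue by fastforce
    show "inj_on (restrict (\<chi> \<circ> fK f) (verts K)) (verts K)"
      using inj fK_in_glue fK_inj unfolding inj_on_def by (metis comp_apply restrict_apply')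
    show "\<forall>(u, v)\<in>edges K. (restrict (\<chi> \<circ> fK f) (verts K) u, restrict (\<chi> \<circ> fK f) (verts K) v) \<in> edges G"
    proof (clarify)
      fix u v assume uv: "(u, v) \<in> edges K"
      have "Inl u \<in> fK f u" "Inl v \<in> fK f v" "(Inl u, Inl v) \<in> sum_edges K H"
        using uv by (auto simp: mem_fK sum_edges_def)
      then have "(fK f u, fK f v) \<in> edges (glue K H f)"
        using eK[OF uv] fK_in_glue[of u K f H] fK_in_glue[of v K f H] unfolding glue_edges by (simp only: mem_Collect_eq case_prod_conv) blast
      then show "(restrict (\<chi> \<circ> fK f) (verts K) u, restrict (\<chi> \<circ> fK f) (verts K) v) \<in> edges G"
        using eK[OF uv] ed by simp
    qed
  qed
  have 2: "inj_hom H G (restrict (\<chi> \<circ> fH f) (verts H))"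
    unfolding inj_hom_def
  proof (intro conjI)
    show "restrict (\<chi> \<circ> fH f) (verts H) \<in> verts H \<rightarrow>\<^sub>E verts G"
      using ext fH_in_glue by fastforce
    show "inj_on (restrict (\<chi> \<circ> fH f) (verts H)) (verts H)"
      using inj fH_in_glue fH_inj unfolding inj_on_def by (metis comp_apply restrict_apply')
    show "\<forall>(u, v)\<in>edges H. (restrict (\<chi> \<circ> fH f) (verts H) u, restrict (\<chi> \<circ> fH f) (verts H) v) \<in> edges G"
    proof (clarify)
      fix u v assume uv: "(u, v) \<in> edges H"
      have "Inr u \<in> fH f u" "Inr v \<in> fH f v" "(Inr u, Inr v) \<in> sum_edges K H"
        using uv by (auto simp: mem_fH sum_edges_def)
      then have "(fH f u, fH f v) \<in> edges (glue K H f)"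
        using eH[OF uv] fH_in_glue[of u H f K] fH_in_glue[of v H f K] unfolding glue_edges by (simp only: mem_Collect_eq case_prod_conv) blast
      then show "(restrict (\<chi> \<circ> fH f) (verts H) u, restrict (\<chi> \<circ> fH f) (verts H) v) \<in> edges G"
        using eH[OF uv] ed by simp
    qed
  qed
  show ?thesis using 1 2 by blast
qed

lemma ovl_Theta:
  assumes f: "vertex_overlap K H f" and chi: "inj_hom (glue K H f) G \<chi>"
  shows "ovl (verts K) (verts H) (restrict (\<chi> \<circ> fK f) (verts K)) (restrict (\<chi> \<circ> fH f) (verts H)) = f"
proof -
  have inj: "inj_on \<chi> (verts (glue K H f))" using chi unfolding inj_hom_def by auto
  have "v \<in> verts K \<Longrightarrow> w \<in> verts H \<Longrightarrow> \<chi> (fK f v) = \<chi> (fH f w) \<longleftrightarrow> (v, w) \<in> f" for v w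
    using inj_on_eq_iff[OF inj fK_in_glue fH_in_glue] fK_fH[OF f] by metis
  moreover have "f \<subseteq> verts K \<times> verts H" using f unfolding vertex_overlap_def by auto
  ultimately show ?thesis unfolding ovl_def by auto
qed

lemma Psi_into:
  assumes K: "is_graph K" and H: "is_graph H" and phi: "inj_hom K G \<phi>" and psi: "inj_hom H G \<psi>"
  shows "inj_hom (glue K H (ovl (verts K) (verts H) \<phi> \<psi>)) G
           (chi (verts (glue K H (ovl (verts K) (verts H) \<phi> \<psi>))) \<phi> \<psi>)"
proof -
  let ?f = "ovl (verts K) (verts H) \<phi> \<psi>"
  let ?V = "verts (glue K H ?f)"
  let ?c = "chi ?V \<phi> \<psi>"
  have f: "vertex_overlap K H ?f" by (rule ovl_overlap[OF phi psi])
  have V: "?V = fK ?f ` verts K \<union> fH ?f ` verts H" by (rule glue_verts)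
  have pK: "\<phi> \<in> verts K \<rightarrow>\<^sub>E verts G" "inj_on \<phi> (verts K)"
    "\<And>u v. (u, v) \<in> edges K \<Longrightarrow> (\<phi> u, \<phi> v) \<in> edges G"
    using phi unfolding inj_hom_def by auto
  have pH: "\<psi> \<in> verts H \<rightarrow>\<^sub>E verts G" "inj_on \<psi> (verts H)"
    "\<And>u v. (u, v) \<in> edges H \<Longrightarrow> (\<psi> u, \<psi> v) \<in> edges G"
    using psi unfolding inj_hom_def by auto
  have eK: "(u, v) \<in> edges K \<Longrightarrow> u \<in> verts K \<and> v \<in> verts K" for u v
    using K unfolding is_graph_def by auto
  have eH: "(u, v) \<in> edges H \<Longrightarrow> u \<in> verts H \<and> v \<in> verts H" for u v
    using H unfolding is_graph_def by auto
  show ?thesis unfolding inj_hom_def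
  proof (intro conjI)
    show "?c \<in> ?V \<rightarrow>\<^sub>E verts G"
    proof (rule PiE_I)
      fix c assume "c \<in> ?V"
      then have "c \<in> fK ?f ` verts K \<union> fH ?f ` verts H" by (simp only: V)
      then show "?c c \<in> verts G" using pK(1) pH(1) chi_fK[of _ K H \<phi> \<psi>] chi_fH[of _ H K \<phi> \<psi>] by auto
    next
      fix c assume "c \<notin> ?V" then show "?c c = undefined" by (simp add: chi_def)
    qed
    show "inj_on ?c ?V"
    proof (rule inj_onI)
      fix c d assume c: "c \<in> ?V" and d: "d \<in> ?V" and eq: "?c c = ?c d"
      show "c = d"
      proof -
        { fix v w assume v: "v \<in> verts K" and w: "w \<in> verts H" and "\<phi> v = \<psi> w"
          then have "fK ?f v = fH ?f w" using fK_fH[OF f] by (simp add: ovl_def) }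
        note vw = this
        have cK: "\<And>v. v \<in> verts K \<Longrightarrow> ?c (fK ?f v) = \<phi> v" by (rule chi_fK)
        have cH: "\<And>w. w \<in> verts H \<Longrightarrow> ?c (fH ?f w) = \<psi> w" by (rule chi_fH)
        from c[unfolded V] show ?thesis
        proof (elim UnE imageE)
          fix v assume v: "v \<in> verts K" and cv: "c = fK ?f v"
          from d[unfolded V] show ?thesis
          proof (elim UnE imageE)
            fix v' assume v': "v' \<in> verts K" and dv: "d = fK ?f v'"
            have "\<phi> v = \<phi> v'" using eq cK v v' cv dv by simp
            then show ?thesis using inj_onD[OF pK(2) _ v v'] cv dv by simp
          next
            fix w assume w: "w \<in> verts H" and dw: "d = fH ?f w"
            have "\<phi> v = \<psi> w" using eq cK cH v w cv dw by simp
            then show ?thesis using vw v w cv dw by simp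
          qed
        next
          fix w assume w: "w \<in> verts H" and cw: "c = fH ?f w"
          from d[unfolded V] show ?thesis
          proof (elim UnE imageE)
            fix v assume v: "v \<in> verts K" and dv: "d = fK ?f v"
            have "\<phi> v = \<psi> w" using eq cK cH v w cw dv by simp
            then show ?thesis using vw v w cw dv by simp
          next
            fix w' assume w': "w' \<in> verts H" and dw: "d = fH ?f w'"
            have "\<psi> w = \<psi> w'" using eq cH w w' cw dw by simp
            then show ?thesis using inj_onD[OF pH(2) _ w w'] cw dw by simp
          qed
        qed
      qed
    qed
    show "\<forall>(c, d)\<in>edges (glue K H ?f). (?c c, ?c d) \<in> edges G"
    proof (clarify)
      fix c d assume "(c, d) \<in> edges (glue K H ?f)"
      then obtain x y where c: "c \<in> ?V" and d: "d \<in> ?V" and x: "x \<in> c" and y: "y \<in> d"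
        and xy: "(x, y) \<in> sum_edges K H"
        unfolding glue_edges by auto
      have "?c c = valf \<phi> \<psi> x" "?c d = valf \<phi> \<psi> y" using chi_val c d x y by metis+
      moreover have "(valf \<phi> \<psi> x, valf \<phi> \<psi> y) \<in> edges G"
        using xy pK(3) pH(3) by (auto simp: sum_edges_def valf_def)
      ultimately show "(?c c, ?c d) \<in> edges G" by simp
    qed
  qed
qed

lemma Theta_Psi:
  assumes phi: "inj_hom K G \<phi>" and psi: "inj_hom H G \<psi>"
  shows "Theta K H (Psi K H (\<phi>, \<psi>)) = (\<phi>, \<psi>)"
proof -
  have "\<phi> \<in> verts K \<rightarrow>\<^sub>E verts G" "\<psi> \<in> verts H \<rightarrow>\<^sub>E verts G"
    using phi psi unfolding inj_hom_def by auto
  then show ?thesis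
    unfolding Theta_def Psi_def Let_def
    by (auto simp: chi_fK chi_fH PiE_def extensional_def fun_eq_iff)
qed

lemma Psi_Theta:
  assumes f: "vertex_overlap K H f" and chi: "inj_hom (glue K H f) G \<chi>"
  shows "Psi K H (Theta K H (f, \<chi>)) = (f, \<chi>)"
proof -
  let ?p = "restrict (\<chi> \<circ> fK f) (verts K)" and ?q = "restrict (\<chi> \<circ> fH f) (verts H)"
  have o: "ovl (verts K) (verts H) ?p ?q = f" by (rule ovl_Theta[OF f chi])
  have ext: "\<chi> \<in> verts (glue K H f) \<rightarrow>\<^sub>E verts G" using chi unfolding inj_hom_def by auto
  have "chi (verts (glue K H f)) ?p ?q c = \<chi> c" for c
  proof (cases "c \<in> verts (glue K H f)")
    case True
    then have "c \<in> fK f ` verts K \<union> fH f ` verts H" by (simp only: glue_verts)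
    then show ?thesis
      using chi_fK[of _ K H ?p ?q] chi_fH[of _ H K ?p ?q] unfolding o by auto
  next
    case False
    then show ?thesis using ext by (auto simp: chi_def PiE_def extensional_def)
  qed
  then show ?thesis unfolding Theta_def Psi_def Let_def using o by (simp add: fun_eq_iff)
qed

lemma core_bij:
  assumes K: "is_graph K" and H: "is_graph H"
  shows "bij_betw (Theta K H) (SIGMA f:{f. vertex_overlap K H f}. {\<chi>. inj_hom (glue K H f) G \<chi>})
     {(\<phi>, \<psi>). inj_hom K G \<phi> \<and> inj_hom H G \<psi>}"
proof (rule bij_betw_byWitness[where f' = "Psi K H"])
  show "\<forall>a\<in>(SIGMA f:{f. vertex_overlap K H f}. {\<chi>. inj_hom (glue K H f) G \<chi>}). Psi K H (Theta K H a) = a"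
    using Psi_Theta by fastforce
  show "\<forall>a'\<in>{(\<phi>, \<psi>). inj_hom K G \<phi> \<and> inj_hom H G \<psi>}. Theta K H (Psi K H a') = a'"
    using Theta_Psi by fastforce
  show "Theta K H ` (SIGMA f:{f. vertex_overlap K H f}. {\<chi>. inj_hom (glue K H f) G \<chi>})
     \<subseteq> {(\<phi>, \<psi>). inj_hom K G \<phi> \<and> inj_hom H G \<psi>}"
  proof (rule image_subsetI)
    fix p assume "p \<in> (SIGMA f:{f. vertex_overlap K H f}. {\<chi>. inj_hom (glue K H f) G \<chi>})"
    then obtain f \<chi> where p: "p = (f, \<chi>)" and f: "vertex_overlap K H f" and c: "inj_hom (glue K H f) G \<chi>"
      by auto
    show "Theta K H p \<in> {(\<phi>, \<psi>). inj_hom K G \<phi> \<and> inj_hom H G \<psi>}"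
      using Theta_into[OF K H f c] p by (simp add: Theta_def)
  qed
  show "Psi K H ` {(\<phi>, \<psi>). inj_hom K G \<phi> \<and> inj_hom H G \<psi>}
     \<subseteq> (SIGMA f:{f. vertex_overlap K H f}. {\<chi>. inj_hom (glue K H f) G \<chi>})"
    using Psi_into[OF K H] ovl_overlap by (auto simp: Psi_def Let_def)
qed


lemma bij_betw_pred:
  assumes "bij_betw g A B"
  shows "bij_betw g {x\<in>A. P (g x)} {y\<in>B. P y}"
proof -
  have i: "inj_on g A" and im: "g ` A = B" using assms unfolding bij_betw_def by auto
  have "inj_on g {x\<in>A. P (g x)}" using i by (rule inj_on_subset) auto
  moreover have "g ` {x\<in>A. P (g x)} = {y\<in>B. P y}" using im by auto
  ultimately show ?thesis unfolding bij_betw_def by auto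
qed

lemma finite_inj_hom:
  assumes "finite (verts K)" "finite (verts G)"
  shows "finite {\<phi>. inj_hom K G \<phi> \<and> P \<phi>}"
proof (rule finite_subset)
  show "{\<phi>. inj_hom K G \<phi> \<and> P \<phi>} \<subseteq> verts K \<rightarrow>\<^sub>E verts G" unfolding inj_hom_def by auto
  show "finite (verts K \<rightarrow>\<^sub>E verts G)" using assms by (rule finite_PiE)
qed

lemma finite_overlaps:
  assumes "finite (verts K)" "finite (verts H)"
  shows "finite {f. vertex_overlap K H f \<and> R f}"
proof (rule finite_subset)
  show "{f. vertex_overlap K H f \<and> R f} \<subseteq> Pow (verts K \<times> verts H)"
    unfolding vertex_overlap_def by auto
  show "finite (Pow (verts K \<times> verts H))" using assms by simp
qed

lemma count_lemma:
  assumes K: "is_graph K" and H: "is_graph H" and G: "is_graph G"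
    and equiv: "\<And>f \<chi>. vertex_overlap K H f \<Longrightarrow> inj_hom (glue K H f) G \<chi> \<Longrightarrow>
        (R f \<and> P f \<chi>) \<longleftrightarrow> Q (restrict (\<chi> \<circ> fK f) (verts K)) (restrict (\<chi> \<circ> fH f) (verts H))"
  shows "(\<Sum>f\<in>{f. vertex_overlap K H f \<and> R f}. card {\<chi>. inj_hom (glue K H f) G \<chi> \<and> P f \<chi>})
     = card {(\<phi>, \<psi>). inj_hom K G \<phi> \<and> inj_hom H G \<psi> \<and> Q \<phi> \<psi>}"
proof -
  have fK: "finite (verts K)" using K unfolding is_graph_def by auto
  have fH: "finite (verts H)" using H unfolding is_graph_def by auto
  have fG: "finite (verts G)" using G unfolding is_graph_def by auto
  have fgl: "finite (verts (glue K H f))" for f using fK fH by (simp add: glue_verts)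
  let ?F = "{f. vertex_overlap K H f \<and> R f}"
  let ?S = "\<lambda>f. {\<chi>. inj_hom (glue K H f) G \<chi> \<and> P f \<chi>}"
  have "(\<Sum>f\<in>?F. card (?S f)) = card (Sigma ?F ?S)"
    by (rule card_SigmaI[symmetric]) (auto intro: finite_overlaps[OF fK fH] finite_inj_hom[OF fgl fG])
  also have "Sigma ?F ?S = {x \<in> (SIGMA f:{f. vertex_overlap K H f}. {\<chi>. inj_hom (glue K H f) G \<chi>}).
      case_prod Q (Theta K H x)}"
  proof (rule set_eqI)
    fix x :: "('a \<times> 'b) set \<times> (('a + 'b) set \<Rightarrow> 'c)"
    obtain f \<chi> where x: "x = (f, \<chi>)" by (cases x)
    show "x \<in> Sigma ?F ?S \<longleftrightarrow> x \<in> {x \<in> (SIGMA f:{f. vertex_overlap K H f}. {\<chi>. inj_hom (glue K H f) G \<chi>}).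
      case_prod Q (Theta K H x)}"
      using equiv[of f \<chi>] unfolding x by (auto simp: Theta_def)
  qed
  also have "card \<dots> = card {y \<in> {(\<phi>, \<psi>). inj_hom K G \<phi> \<and> inj_hom H G \<psi>}. case_prod Q y}"
    by (rule bij_betw_same_card[OF bij_betw_pred[OF core_bij[OF K H]]])
  also have "{y \<in> {(\<phi>, \<psi>). inj_hom K G \<phi> \<and> inj_hom H G \<psi>}. case_prod Q y}
     = {(\<phi>, \<psi>). inj_hom K G \<phi> \<and> inj_hom H G \<psi> \<and> Q \<phi> \<psi>}" by auto
  finally show ?thesis .
qed

lemma map_restrict_comp:
  "set a \<subseteq> A \<Longrightarrow> map (restrict (\<chi> \<circ> g) A) a = map \<chi> (map g a)"
  by (induction a) auto

lemma ker_eq: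
  assumes "inj_on \<phi> A" "set b \<subseteq> A" "inj_on \<psi> B" "set c \<subseteq> B" "map \<phi> b = map \<psi> c"
  shows "ker b = ker c"
proof -
  have len: "length b = length c" using assms(5) by (metis length_map)
  have "b ! i = b ! j \<longleftrightarrow> c ! i = c ! j" if "i < length b" "j < length b" for i j
  proof -
    have bi: "b ! i \<in> A" "b ! j \<in> A" using that assms(2) by auto
    have ci: "c ! i \<in> B" "c ! j \<in> B" using that len assms(4) by auto
    have "\<phi> (b ! i) = \<psi> (c ! i)" "\<phi> (b ! j) = \<psi> (c ! j)"
      using assms(5) that len by (metis nth_map)+
    then show ?thesis using inj_on_eq_iff[OF assms(1) bi] inj_on_eq_iff[OF assms(3) ci] by metis
  qed
  then show ?thesis unfolding ker_def using len by auto
qed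

theorem proposition4p5:
  fixes G :: "'g graph" and K :: "'a graph" and H :: "'b graph"
    and a b :: "'a list" and a' b' :: "'b list"
  assumes "is_graph G"
    and "is_bilabelled K a b"
    and "is_bilabelled H a' b'"
  shows
    "(op_tensor (length a) (length b) (length a') (length b') (hom_op G K a b) (hom_op G H a' b')
       = (\<lambda>j i. \<Sum>f\<in>{f. vertex_overlap K H f}.
            hom_op G (glue K H f) (map (fK f) a @ map (fH f) a') (map (fK f) b @ map (fH f) b') j i))
  \<and>
    (length a' = length b \<longrightarrow>
       op_comp (verts G) (length b) (hom_op G H a' b') (hom_op G K a b)
       = (\<lambda>j i. \<Sum>f\<in>{f. vertex_overlap K H f \<and> (\<forall>i < length b. (b ! i, a' ! i) \<in> f)}.
            hom_op G (glue K H f) (map (fK f) a) (map (fH f) b') j i))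
  \<and>
    (length a' = length b \<longrightarrow> ker b \<noteq> ker a' \<longrightarrow>
       op_comp (verts G) (length b) (hom_op G H a' b') (hom_op G K a b) = op_zero)
  \<and>
    op_adj (hom_op G K a b) = hom_op G K b a"
proof -
  have G: "is_graph G" using assms(1) .
  have K: "is_graph K" and aK: "set a \<subseteq> verts K" and bK: "set b \<subseteq> verts K"
    using assms(2) unfolding is_bilabelled_def by auto
  have H: "is_graph H" and aH: "set a' \<subseteq> verts H" and bH: "set b' \<subseteq> verts H"
    using assms(3) unfolding is_bilabelled_def by auto
  have fK: "finite (verts K)" using K unfolding is_graph_def by auto
  have fH: "finite (verts H)" using H unfolding is_graph_def by auto
  have fG: "finite (verts G)" using G unfolding is_graph_def by auto
  have P1: "op_tensor (length a) (length b) (length a') (length b') (hom_op G K a b) (hom_op G H a' b')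
       = (\<lambda>j i. \<Sum>f\<in>{f. vertex_overlap K H f}.
            hom_op G (glue K H f) (map (fK f) a @ map (fH f) a') (map (fK f) b @ map (fH f) b') j i)"
  proof (intro ext)
    fix j i :: "'g list"
    show "op_tensor (length a) (length b) (length a') (length b') (hom_op G K a b) (hom_op G H a' b') j i
      = (\<Sum>f\<in>{f. vertex_overlap K H f}.
            hom_op G (glue K H f) (map (fK f) a @ map (fH f) a') (map (fK f) b @ map (fH f) b') j i)"
    proof (cases "length j = length b + length b' \<and> length i = length a + length a'")
      case True
      let ?A1 = "{\<phi>. inj_hom K G \<phi> \<and> map \<phi> a = take (length a) i \<and> map \<phi> b = take (length b) j}"
      let ?A2 = "{\<psi>. inj_hom H G \<psi> \<and> map \<psi> a' = drop (length a) i \<and> map \<psi> b' = drop (length b) j}"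
      have "(\<Sum>f\<in>{f. vertex_overlap K H f \<and> True}. card {\<chi>. inj_hom (glue K H f) G \<chi> \<and>
           (map \<chi> (map (fK f) a @ map (fH f) a') = i \<and> map \<chi> (map (fK f) b @ map (fH f) b') = j)})
        = card {(\<phi>, \<psi>). inj_hom K G \<phi> \<and> inj_hom H G \<psi> \<and>
           ((map \<phi> a = take (length a) i \<and> map \<phi> b = take (length b) j) \<and>
            (map \<psi> a' = drop (length a) i \<and> map \<psi> b' = drop (length b) j))}"
      proof (rule count_lemma[OF K H G])
        fix f and \<chi> :: "('a + 'b) set \<Rightarrow> 'g"
        have e: "map \<chi> (map (fK f) a) = map (restrict (\<chi> \<circ> fK f) (verts K)) a"
             "map \<chi> (map (fK f) b) = map (restrict (\<chi> \<circ> fK f) (verts K)) b"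
             "map \<chi> (map (fH f) a') = map (restrict (\<chi> \<circ> fH f) (verts H)) a'"
             "map \<chi> (map (fH f) b') = map (restrict (\<chi> \<circ> fH f) (verts H)) b'"
          using map_restrict_comp aK bK aH bH by metis+
        show "(True \<and> map \<chi> (map (fK f) a @ map (fH f) a') = i \<and> map \<chi> (map (fK f) b @ map (fH f) b') = j)
          \<longleftrightarrow> ((map (restrict (\<chi> \<circ> fK f) (verts K)) a = take (length a) i \<and>
                 map (restrict (\<chi> \<circ> fK f) (verts K)) b = take (length b) j) \<and>
                (map (restrict (\<chi> \<circ> fH f) (verts H)) a' = drop (length a) i \<and>
                 map (restrict (\<chi> \<circ> fH f) (verts H)) b' = drop (length b) j))"
          unfolding map_append e append_eq_conv_conj by auto
      qed
      also have "{(\<phi>, \<psi>). inj_hom K G \<phi> \<and> inj_hom H G \<psi> \<and>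
           ((map \<phi> a = take (length a) i \<and> map \<phi> b = take (length b) j) \<and>
            (map \<psi> a' = drop (length a) i \<and> map \<psi> b' = drop (length b) j))} = ?A1 \<times> ?A2"
        by auto
      also have "card (?A1 \<times> ?A2) = card ?A1 * card ?A2" by (rule card_cartesian_product)
      finally have eq: "(\<Sum>f\<in>{f. vertex_overlap K H f}. card {\<chi>. inj_hom (glue K H f) G \<chi> \<and>
           (map \<chi> (map (fK f) a @ map (fH f) a') = i \<and> map \<chi> (map (fK f) b @ map (fH f) b') = j)})
           = card ?A1 * card ?A2" by simp
      have "op_tensor (length a) (length b) (length a') (length b') (hom_op G K a b) (hom_op G H a' b') j i
          = of_nat (card ?A1 * card ?A2)"
        using True by (simp add: op_tensor_def hom_op_def)
      also have "\<dots> = of_nat (\<Sum>f\<in>{f. vertex_overlap K H f}. card {\<chi>. inj_hom (glue K H f) G \<chi> \<and>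
           (map \<chi> (map (fK f) a @ map (fH f) a') = i \<and> map \<chi> (map (fK f) b @ map (fH f) b') = j)})"
        by (simp only: eq)
      also have "\<dots> = (\<Sum>f\<in>{f. vertex_overlap K H f}.
            hom_op G (glue K H f) (map (fK f) a @ map (fH f) a') (map (fK f) b @ map (fH f) b') j i)"
        by (simp only: hom_op_def of_nat_sum)
      finally show ?thesis .
    next
      case False
      have emp: "{\<chi>. inj_hom (glue K H f) G \<chi> \<and> map \<chi> (map (fK f) a @ map (fH f) a') = i \<and>
          map \<chi> (map (fK f) b @ map (fH f) b') = j} = {}" for f
      proof (rule equals0I)
        fix \<chi> assume "\<chi> \<in> {\<chi>. inj_hom (glue K H f) G \<chi> \<and> map \<chi> (map (fK f) a @ map (fH f) a') = i \<and>
          map \<chi> (map (fK f) b @ map (fH f) b') = j}"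
        then have "map \<chi> (map (fK f) a @ map (fH f) a') = i" "map \<chi> (map (fK f) b @ map (fH f) b') = j"
          by auto
        then have "length i = length a + length a'" "length j = length b + length b'"
          by (metis length_append length_map)+
        then show False using False by simp
      qed
      have "op_tensor (length a) (length b) (length a') (length b') (hom_op G K a b) (hom_op G H a' b') j i = 0"
        using False unfolding op_tensor_def by auto
      moreover have "(\<Sum>f\<in>{f. vertex_overlap K H f}.
            hom_op G (glue K H f) (map (fK f) a @ map (fH f) a') (map (fK f) b @ map (fH f) b') j i) = 0"
        unfolding hom_op_def emp by simp
      ultimately show ?thesis by simp
    qed
  qed
  have P2: "length a' = length b \<longrightarrow>
       op_comp (verts G) (length b) (hom_op G H a' b') (hom_op G K a b)
       = (\<lambda>j i. \<Sum>f\<in>{f. vertex_overlap K H f \<and> (\<forall>i < length b. (b ! i, a' ! i) \<in> f)}.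
            hom_op G (glue K H f) (map (fK f) a) (map (fH f) b') j i)"
  proof (intro impI ext)
    assume len: "length a' = length b"
    fix j i :: "'g list"
    let ?T = "{t. set t \<subseteq> verts G \<and> length t = length b}"
    let ?At = "\<lambda>t. {\<phi>. inj_hom K G \<phi> \<and> map \<phi> a = i \<and> map \<phi> b = t}"
    let ?Bt = "\<lambda>t. {\<psi>. inj_hom H G \<psi> \<and> map \<psi> a' = t \<and> map \<psi> b' = j}"
    have "op_comp (verts G) (length b) (hom_op G H a' b') (hom_op G K a b) j i
        = of_nat (\<Sum>t\<in>?T. card (?At t \<times> ?Bt t))"
      unfolding op_comp_def hom_op_def of_nat_sum card_cartesian_product of_nat_mult
      by (simp add: mult.commute)
    also have "(\<Sum>t\<in>?T. card (?At t \<times> ?Bt t)) = card (\<Union>t\<in>?T. ?At t \<times> ?Bt t)"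
    proof (rule card_UN_disjoint[symmetric])
      show "finite ?T" using finite_lists_length_eq[OF fG] .
      show "\<forall>t\<in>?T. finite (?At t \<times> ?Bt t)"
        using finite_inj_hom[OF fK fG] finite_inj_hom[OF fH fG] by (intro ballI finite_cartesian_product) auto
      show "\<forall>t\<in>?T. \<forall>s\<in>?T. t \<noteq> s \<longrightarrow> (?At t \<times> ?Bt t) \<inter> (?At s \<times> ?Bt s) = {}"
         by auto
    qed
    also have "(\<Union>t\<in>?T. ?At t \<times> ?Bt t) = {(\<phi>, \<psi>). inj_hom K G \<phi> \<and> inj_hom H G \<psi> \<and>
        (map \<phi> a = i \<and> map \<psi> b' = j \<and> map \<phi> b = map \<psi> a')}"
    proof (rule set_eqI)
      fix p :: "('a \<Rightarrow> 'g) \<times> ('b \<Rightarrow> 'g)"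
      obtain \<phi> \<psi> where p: "p = (\<phi>, \<psi>)" by (cases p)
      show "p \<in> (\<Union>t\<in>?T. ?At t \<times> ?Bt t) \<longleftrightarrow> p \<in> {(\<phi>, \<psi>). inj_hom K G \<phi> \<and> inj_hom H G \<psi> \<and>
        (map \<phi> a = i \<and> map \<psi> b' = j \<and> map \<phi> b = map \<psi> a')}"
      proof
        assume "p \<in> (\<Union>t\<in>?T. ?At t \<times> ?Bt t)"
        then show "p \<in> {(\<phi>, \<psi>). inj_hom K G \<phi> \<and> inj_hom H G \<psi> \<and>
          (map \<phi> a = i \<and> map \<psi> b' = j \<and> map \<phi> b = map \<psi> a')}" by auto
      next
        assume "p \<in> {(\<phi>, \<psi>). inj_hom K G \<phi> \<and> inj_hom H G \<psi> \<and>
          (map \<phi> a = i \<and> map \<psi> b' = j \<and> map \<phi> b = map \<psi> a')}"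
        then have h: "inj_hom K G \<phi>" "inj_hom H G \<psi>" "map \<phi> a = i" "map \<psi> b' = j"
          "map \<phi> b = map \<psi> a'" using p by auto
        have "\<phi> \<in> verts K \<rightarrow>\<^sub>E verts G" using h(1) unfolding inj_hom_def by auto
        then have "set (map \<phi> b) \<subseteq> verts G" using bK by auto
        then have "map \<phi> b \<in> ?T" by simp
        moreover have "p \<in> ?At (map \<phi> b) \<times> ?Bt (map \<phi> b)" using h p by simp
        ultimately show "p \<in> (\<Union>t\<in>?T. ?At t \<times> ?Bt t)" by blast
      qed
    qed
    also have "card {(\<phi>, \<psi>). inj_hom K G \<phi> \<and> inj_hom H G \<psi> \<and>
        (map \<phi> a = i \<and> map \<psi> b' = j \<and> map \<phi> b = map \<psi> a')}
      = (\<Sum>f\<in>{f. vertex_overlap K H f \<and> (\<forall>i < length b. (b ! i, a' ! i) \<in> f)}.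
           card {\<chi>. inj_hom (glue K H f) G \<chi> \<and> (map \<chi> (map (fK f) a) = i \<and> map \<chi> (map (fH f) b') = j)})"
    proof (rule count_lemma[OF K H G, symmetric])
      fix f and \<chi> :: "('a + 'b) set \<Rightarrow> 'g"
      assume ov: "vertex_overlap K H f" and ih: "inj_hom (glue K H f) G \<chi>"
      define p where "p = restrict (\<chi> \<circ> fK f) (verts K)"
      define q where "q = restrict (\<chi> \<circ> fH f) (verts H)"
      have o: "ovl (verts K) (verts H) p q = f" unfolding p_def q_def by (rule ovl_Theta[OF ov ih])
      have R1: "(b ! k, a' ! k) \<in> f \<longleftrightarrow> p (b ! k) = q (a' ! k)" if k: "k < length b" for k
      proof -
        have bk: "b ! k \<in> verts K" using k bK by auto
        have ak: "a' ! k \<in> verts H" using k len aH by (metis nth_mem subsetD)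
        have "(b ! k, a' ! k) \<in> f \<longleftrightarrow> (b ! k, a' ! k) \<in> ovl (verts K) (verts H) p q" by (simp only: o)
        also have "\<dots> \<longleftrightarrow> p (b ! k) = q (a' ! k)" using bk ak by (simp add: ovl_def)
        finally show ?thesis .
      qed
      have R: "(\<forall>k < length b. (b ! k, a' ! k) \<in> f) \<longleftrightarrow> map p b = map q a'"
        using R1 len by (simp add: list_eq_iff_nth_eq)
      have e: "map \<chi> (map (fK f) a) = map p a" "map \<chi> (map (fH f) b') = map q b'"
        unfolding p_def q_def using map_restrict_comp aK bH by metis+
      show "((\<forall>k < length b. (b ! k, a' ! k) \<in> f) \<and> (map \<chi> (map (fK f) a) = i \<and> map \<chi> (map (fH f) b') = j))
        \<longleftrightarrow> (map (restrict (\<chi> \<circ> fK f) (verts K)) a = i \<and> map (restrict (\<chi> \<circ> fH f) (verts H)) b' = j \<and>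
             map (restrict (\<chi> \<circ> fK f) (verts K)) b = map (restrict (\<chi> \<circ> fH f) (verts H)) a')"
        unfolding p_def[symmetric] q_def[symmetric] using R e by auto
    qed
    finally show "op_comp (verts G) (length b) (hom_op G H a' b') (hom_op G K a b) j i
      = (\<Sum>f\<in>{f. vertex_overlap K H f \<and> (\<forall>i < length b. (b ! i, a' ! i) \<in> f)}.
            hom_op G (glue K H f) (map (fK f) a) (map (fH f) b') j i)"
      by (simp only: hom_op_def of_nat_sum)
  qed
  have P3: "length a' = length b \<longrightarrow> ker b \<noteq> ker a' \<longrightarrow>
       op_comp (verts G) (length b) (hom_op G H a' b') (hom_op G K a b) = op_zero"
  proof (intro impI)
    assume nk: "ker b \<noteq> ker a'"
    show "op_comp (verts G) (length b) (hom_op G H a' b') (hom_op G K a b) = op_zero"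
      unfolding op_comp_def op_zero_def
    proof (intro ext sum.neutral ballI)
      fix j i t :: "'g list"
      show "hom_op G H a' b' j t * hom_op G K a b t i = 0"
      proof (rule ccontr)
        assume "hom_op G H a' b' j t * hom_op G K a b t i \<noteq> 0"
        then have "card {\<psi>. inj_hom H G \<psi> \<and> map \<psi> a' = t \<and> map \<psi> b' = j} \<noteq> 0"
          "card {\<phi>. inj_hom K G \<phi> \<and> map \<phi> a = i \<and> map \<phi> b = t} \<noteq> 0"
          unfolding hom_op_def by auto
        then obtain \<psi> \<phi> where "inj_hom H G \<psi>" "map \<psi> a' = t" "inj_hom K G \<phi>" "map \<phi> b = t"
          by (metis (mono_tags, lifting) Collect_empty_eq card.empty)
        then have "ker b = ker a'"
          using ker_eq[of \<phi> "verts K" b \<psi> "verts H" a'] bK aH unfolding inj_hom_def by auto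
        then show False using nk by simp
      qed
    qed
  qed
  have P4: "op_adj (hom_op G K a b) = hom_op G K b a"
    unfolding op_adj_def hom_op_def
    by (auto simp: fun_eq_iff intro!: arg_cong[where f = card])
  show ?thesis using P1 P2 P3 P4 by blast
qed

end
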